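(* Let $\delta\in(0,1)$ and suppose $N\le 1000\ell n^{(1-\delta)\ell}$ and $\ell\ge 20$. Then with probability at least $0.95$ over a sample $G'\sim\mathrm{RGP}_{N,\ell}\circ\mathcal{G}(n,\tfrac12)$, with $G'=(\{S_i\}_{i\in[N]},E')$, the following event occurs: for every $M\subseteq[N]$ with $|M|\le n^{0.99\delta}/\ell$, we have $\left|\bigcup_{i\in M}S_i\right|\ge 0.01\delta|M|\ell$.
   Context: $\mathcal{G}(n,\tfrac12)$ is the Erdős–Rényi distribution on $n$-vertex graphs with edge probability $1/2$. Randomized graph product: given an $n$-vertex graph $G=(V,E)$ and positive integers $N,\ell$, the random graph $G'\sim\mathrm{RGP}_{N,\ell}(G)$ is constructed as follows. For each $i\in[N]$, independently sample $\ell$ vertices uniformly at random from $V$ and let $S_i\subseteq V$ be the set of sampled vertices. The vertex set is $\{S_1,\dots,S_N\}$ (one vertex per index $i$), and for distinct $i,j$, $S_i,S_j$ are adjacent iff $S_i\cup S_j$ induces a clique in $G$. $\mathrm{RGP}_{N,\ell}\circ\mathcal{G}(n,\tfrac12)$ denotes sampling $G\sim\mathcal{G}(n,\tfrac12)$ and then $G'\sim\mathrm{RGP}_{N,\ell}(G)$. *)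

theory Defs
  imports "HOL-Probability.Probability"
begin

definition all_edges :: "nat \<Rightarrow> nat set set" where
  "all_edges n = {e. e \<subseteq> {..<n} \<and> card e = 2}"

text \<open>Erdos-Renyi G(n,1/2): uniform distribution on all edge sets
  (equivalently, every potential edge independently with probability 1/2).\<close>
definition gnp_half :: "nat \<Rightarrow> nat set set pmf" where
  "gnp_half n = pmf_of_set (Pow (all_edges n))"

definition is_clique :: "nat set set \<Rightarrow> nat set \<Rightarrow> bool" where
  "is_clique E A \<longleftrightarrow> (\<forall>u\<in>A. \<forall>v\<in>A. u \<noteq> v \<longrightarrow> {u, v} \<in> E)"

text \<open>Each S i is the set of l independent uniform samples
  (with replacement) from {0..<n}.\<close>
definition rgp :: "nat \<Rightarrow> nat \<Rightarrow> nat \<Rightarrow> nat set set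
    \<Rightarrow> ((nat \<Rightarrow> nat set) \<times> (nat \<Rightarrow> nat \<Rightarrow> bool)) pmf" where
  "rgp N l n E =
     map_pmf (\<lambda>xs. let S = (\<lambda>i. set (xs i)) in
                (S, \<lambda>i j. i < N \<and> j < N \<and> i \<noteq> j \<and> is_clique E (S i \<union> S j)))
       (Pi_pmf {..<N} [] (\<lambda>_. replicate_pmf l (pmf_of_set {..<n})))"

definition rgp_gnp :: "nat \<Rightarrow> nat \<Rightarrow> nat
    \<Rightarrow> ((nat \<Rightarrow> nat set) \<times> (nat \<Rightarrow> nat \<Rightarrow> bool)) pmf" where
  "rgp_gnp N l n = bind_pmf (gnp_half n) (\<lambda>E. rgp N l n E)"

end

theory Submission imports Defs begin

lemma l_bound: "l \<ge> 20 \<Longrightarrow> 1000 * real l * (1/100)^l \<le> 1/100"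
proof (induction l rule: dec_induct)
  case base
  then show ?case by (simp add: power_divide)
next
  case (step k)
  have "1000 * real (Suc k) * (1/100)^(Suc k) \<le> 1000 * (2 * real k) * ((1/100)^k / 100)"
    by (intro mult_mono) (use step in auto)
  also have "\<dots> \<le> 1000 * real k * (1/100)^k" by simp
  finally show ?case using step by linarith
qed

lemma analytic:
  fixes \<delta> :: real and N l n m K :: nat
  assumes d: "0 < \<delta>" "\<delta> < 1" and n1: "n \<ge> 1"
    and NN: "real N \<le> 1000 * real l * real n powr ((1 - \<delta>) * real l)"
    and l20: "l \<ge> 20" and m1: "m \<ge> 1"
    and mB: "real m \<le> real n powr (99/100 * \<delta>) / real l"
    and K: "real K \<le> \<delta>/100 * real m * real l"
  shows "real (N choose m) * real n ^ K * (real K / real n) ^ (l * m) \<le> (1/100)^m"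
proof -
  define x where "x = real n"
  define L where "L = real l"
  define c where "c = \<delta>/100"
  have x1: "x \<ge> 1" using n1 by (simp add: x_def)
  have x0: "x > 0" using x1 by simp
  have L20: "L \<ge> 20" using l20 by (simp add: L_def)
  have c0: "0 < c" "c \<le> 1/100" using d by (auto simp: c_def)
  have A: "real (N choose m) \<le> real N ^ m"
  proof -
    have "(N choose m) * 1 \<le> (N choose m) * fact m" by (intro mult_le_mono2) (simp add: fact_ge_1)
    also have "\<dots> \<le> N ^ m" by (rule binomial_fact_pow)
    finally have "(N choose m) \<le> N ^ m" by simp
    then show ?thesis by (metis of_nat_le_iff of_nat_power)
  qed
  have B: "real N ^ m \<le> (1000 * L) ^ m * x powr ((1 - \<delta>) * L * m)"
  proof -
    have "real N ^ m \<le> (1000 * L * x powr ((1 - \<delta>) * L)) ^ m"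
      by (intro power_mono) (use NN in \<open>auto simp: x_def L_def\<close>)
    also have "\<dots> = (1000 * L) ^ m * (x powr ((1 - \<delta>) * L)) powr (real m)"
      using x0 by (simp add: power_mult_distrib powr_realpow)
    also have "\<dots> = (1000 * L) ^ m * x powr ((1 - \<delta>) * L * m)"
      by (simp add: powr_powr)
    finally show ?thesis .
  qed
  have C: "real n ^ K \<le> x powr (c * m * L)"
  proof -
    have "real n ^ K = x powr (real K)" using x0 by (simp add: x_def powr_realpow)
    also have "\<dots> \<le> x powr (c * m * L)"
      by (intro powr_mono) (use K x1 in \<open>auto simp: c_def L_def\<close>)
    finally show ?thesis .
  qed
  have D: "real K \<le> c * x powr (99/100 * \<delta>)"
  proof -
    have "real m * L \<le> x powr (99/100 * \<delta>)"
      using mB L20 by (simp add: x_def L_def field_simps)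
    then have "c * (real m * L) \<le> c * x powr (99/100 * \<delta>)"
      using c0 by (intro mult_left_mono) auto
    then show ?thesis using K by (simp add: c_def L_def mult.assoc)
  qed
  have E: "(real K / real n) ^ (l * m) \<le> c ^ (l*m) * x powr (99/100 * \<delta> * L * m) / x powr (L * m)"
  proof -
    have "(real K / real n) ^ (l * m) = real K ^ (l * m) / x ^ (l * m)"
      by (simp add: x_def power_divide)
    also have "\<dots> \<le> (c * x powr (99/100 * \<delta>)) ^ (l*m) / x ^ (l * m)"
      using D x0 by (intro divide_right_mono power_mono) auto
    also have "(c * x powr (99/100 * \<delta>)) ^ (l*m) = c ^ (l*m) * x powr (99/100 * \<delta> * L * m)"
      using x0 by (simp add: power_mult_distrib powr_realpow[symmetric] powr_powr L_def mult_ac)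
    also have "x ^ (l * m) = x powr (L * m)"
      using x0 by (simp add: powr_realpow[symmetric] L_def)
    finally show ?thesis .
  qed
  have "real (N choose m) * real n ^ K * (real K / real n) ^ (l * m)
     \<le> ((1000 * L) ^ m * x powr ((1 - \<delta>) * L * m)) * x powr (c * m * L) *
        (c ^ (l*m) * x powr (99/100 * \<delta> * L * m) / x powr (L * m))"
  proof -
    have AB: "real (N choose m) \<le> (1000 * L) ^ m * x powr ((1 - \<delta>) * L * m)"
      using A B by linarith
    show ?thesis by (intro mult_mono AB C E) (use L20 c0 in auto)
  qed
  also have "\<dots> = (1000 * L) ^ m * c ^ (l*m) *
        x powr ((1 - \<delta>) * L * m + c * m * L + 99/100 * \<delta> * L * m - L * m)"
    by (simp add: powr_add powr_diff)
  also have "(1 - \<delta>) * L * m + c * m * L + 99/100 * \<delta> * L * m - L * m = 0"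
    by (simp add: c_def algebra_simps)
  also have "(1000 * L) ^ m * c ^ (l*m) * x powr 0 = (1000 * L * c ^ l) ^ m"
    using x0 by (simp add: power_mult_distrib power_mult)
  also have "\<dots> \<le> (1/100) ^ m"
  proof (intro power_mono)
    have "1000 * L * c ^ l \<le> 1000 * L * (1/100) ^ l"
      using c0 L20 by (intro mult_left_mono power_mono) auto
    also have "\<dots> \<le> 1/100" using l_bound[OF l20] by (simp add: L_def)
    finally show "1000 * L * c ^ l \<le> 1/100" .
    show "0 \<le> 1000 * L * c ^ l" using c0 L20 by simp
  qed
  finally show ?thesis .
qed


lemma rep_prob:
  fixes p :: "nat pmf"
  shows "measure_pmf.prob (replicate_pmf l p) {ys. set ys \<subseteq> T} = (measure_pmf.prob p T) ^ l"
proof (induction l)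
  case 0
  then show ?case by simp
next
  case (Suc l)
  have "replicate_pmf (Suc l) p = map_pmf (\<lambda>(x,xs). x#xs) (pair_pmf p (replicate_pmf l p))"
    by (simp add: pair_pmf_def map_pmf_def bind_assoc_pmf bind_return_pmf)
  moreover have "(\<lambda>(x,xs). x#xs) -` {ys. set ys \<subseteq> T} = T \<times> {ys. set ys \<subseteq> T}"
    by auto
  ultimately show ?case using Suc
    by (simp add: measure_pmf_prob_product)
qed

lemma fst_rgp: "map_pmf fst (rgp_gnp N l n) = map_pmf (\<lambda>xs i. set (xs i)) (Pi_pmf {..<N} [] (\<lambda>_. replicate_pmf l (pmf_of_set {..<n})))"
  unfolding rgp_gnp_def rgp_def map_bind_pmf
  by (simp add: pmf.map_comp o_def Let_def)

lemma event_prob: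
  fixes N l n :: nat and M T :: "nat set"
  assumes "M \<subseteq> {..<N}" "n \<ge> 1" "finite T"
  shows "measure_pmf.prob (Pi_pmf {..<N} [] (\<lambda>_. replicate_pmf l (pmf_of_set {..<n})))
           {xs. \<forall>i\<in>M. set (xs i) \<subseteq> T} \<le> (real (card T) / real n) ^ (l * card M)"
proof -
  define Q where "Q = pmf_of_set {..<(n::nat)}"
  define a where "a = measure_pmf.prob Q T"
  have a_le: "a \<le> real (card T) / real n" and a0: "0 \<le> a"
  proof -
    have "a = real (card ({..<n} \<inter> T)) / real n"
    proof -
      have "0 \<in> {..<n}" using assms(2) by simp
      then have "{..<n} \<noteq> {}" by blast
      then show ?thesis unfolding a_def Q_def by (subst measure_pmf_of_set) auto
    qed
    also have "\<dots> \<le> real (card T) / real n"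
      using assms(3) by (intro divide_right_mono) (auto intro: card_mono)
    finally show "a \<le> real (card T) / real n" .
    show "0 \<le> a" by (simp add: a_def)
  qed
  have M_fin: "finite M" using assms(1) finite_subset by blast
  have "{xs. \<forall>i\<in>M. set (xs i) \<subseteq> T} = Pi {..<N} (\<lambda>i. if i \<in> M then {ys. set ys \<subseteq> T} else UNIV)"
    using assms(1) by (auto simp: Pi_def)
  then have "measure_pmf.prob (Pi_pmf {..<N} [] (\<lambda>_. replicate_pmf l Q)) {xs. \<forall>i\<in>M. set (xs i) \<subseteq> T}
      = (\<Prod>i\<in>{..<N}. measure_pmf.prob (replicate_pmf l Q) (if i \<in> M then {ys. set ys \<subseteq> T} else UNIV))"
    by (simp add: measure_Pi_pmf_Pi)
  also have "\<dots> = (\<Prod>i\<in>{..<N}. if i \<in> M then a ^ l else 1)"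
    by (intro prod.cong) (auto simp: rep_prob a_def)
  also have "\<dots> = (a ^ l) ^ card M"
    using assms(1) by (simp add: prod.If_cases Int_absorb1)
  also have "\<dots> \<le> (real (card T) / real n) ^ (l * card M)"
    unfolding power_mult using a_le a0 by (intro power_mono) auto
  finally show ?thesis by (simp add: Q_def)
qed

lemma geom: "(\<Sum>m\<in>{1..k}. (1/100::real)^m) \<le> 1/99 - (1/100)^k/99"
proof (induction k)
  case 0
  then show ?case by simp
next
  case (Suc k)
  have "(\<Sum>m\<in>{1..Suc k}. (1/100::real)^m) = (\<Sum>m\<in>{1..k}. (1/100::real)^m) + (1/100)^k / 100"
    by simp
  then show ?case using Suc.IH by simp
qed

lemma floor_le': "0 \<le> (x::real) \<Longrightarrow> real (nat \<lfloor>x\<rfloor>) \<le> x"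
  by simp


theorem lemma2p4:
  fixes \<delta> :: real and N l n :: nat
  assumes "0 < \<delta>" "\<delta> < 1"
    and "n \<ge> 1"
    and "real N \<le> 1000 * real l * real n powr ((1 - \<delta>) * real l)"
    and "l \<ge> 20"
  shows "measure_pmf.prob (rgp_gnp N l n)
           {G'. \<forall>M \<subseteq> {..<N}. real (card M) \<le> real n powr (99/100 * \<delta>) / real l \<longrightarrow>
                  real (card (\<Union>i\<in>M. fst G' i)) \<ge> 1/100 * \<delta> * real (card M) * real l}
         \<ge> 95/100"
proof -
  define Q where "Q = pmf_of_set {..<n}"
  define P where "P = Pi_pmf {..<N} [] (\<lambda>_. replicate_pmf l Q)"
  define B where "B = real n powr (99/100 * \<delta>) / real l"
  define Good where "Good = {S :: nat \<Rightarrow> nat set. \<forall>M \<subseteq> {..<N}. real (card M) \<le> B \<longrightarrow>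
                  real (card (\<Union>i\<in>M. S i)) \<ge> 1/100 * \<delta> * real (card M) * real l}"
  define F where "F = (\<lambda>(xs :: nat \<Rightarrow> nat list) i. set (xs i))"
  define Bad where "Bad = UNIV - F -` Good"
  define mm where "mm = nat \<lfloor>B\<rfloor>"
  define Kf where "Kf = (\<lambda>m::nat. nat \<lfloor>\<delta>/100 * real m * real l\<rfloor>)"
  define Ev where "Ev = (\<lambda>M (f :: nat \<Rightarrow> nat). {xs :: nat \<Rightarrow> nat list. \<forall>i\<in>M. set (xs i) \<subseteq> f ` {..<Kf (card M)}})"
  define SM where "SM = (\<lambda>m. {M. M \<subseteq> {..<N} \<and> card M = m})"
  have n0: "{..<n} \<noteq> {}"
  proof -
    have "0 \<in> {..<n}" using assms(3) by simp
    then show ?thesis by blast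
  qed
  have setQ: "set_pmf Q = {..<n}" using n0 by (simp add: Q_def)
  have supp: "set (xs i) \<subseteq> {..<n} \<and> length (xs i) = l" if "xs \<in> set_pmf P" "i < N" for xs i
  proof -
    have "xs \<in> PiE_dflt {..<N} [] (set_pmf \<circ> (\<lambda>_. replicate_pmf l Q))"
      using that(1) unfolding P_def by (simp add: set_Pi_pmf)
    then have "xs i \<in> set_pmf (replicate_pmf l Q)" using that(2) by (simp add: PiE_dflt_def)
    then show ?thesis by (auto simp: set_replicate_pmf setQ)
  qed
  have cover: "Bad \<inter> set_pmf P \<subseteq> (\<Union>m\<in>{1..mm}. \<Union>M\<in>SM m. \<Union>f\<in>({..<Kf m} \<rightarrow>\<^sub>E {..<n}). Ev M f)"
  proof
    fix xs assume xs: "xs \<in> Bad \<inter> set_pmf P"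
    then obtain M where M: "M \<subseteq> {..<N}" "real (card M) \<le> B"
      and lt: "real (card (\<Union>i\<in>M. set (xs i))) < 1/100 * \<delta> * real (card M) * real l"
      by (auto simp: Bad_def Good_def F_def not_le)
    define m where "m = card M"
    define U where "U = (\<Union>i\<in>M. set (xs i))"
    have finM: "finite M" using M(1) finite_subset by blast
    have m1: "m \<ge> 1"
    proof (rule ccontr)
      assume "\<not> m \<ge> 1"
      then have "card M = 0" by (simp add: m_def)
      then have "M = {}" using finM by simp
      then show False using lt by simp
    qed
    have mmm: "m \<le> mm" using M(2) unfolding mm_def m_def by (rule le_nat_floor)
    have Usub: "U \<subseteq> {..<n}" using supp xs M(1) by (force simp: U_def)
    have finU: "finite U" using Usub finite_subset by blast
    obtain i0 where i0: "i0 \<in> M" using m1 m_def by fastforce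
    have "length (xs i0) = l" using supp xs M(1) i0 by auto
    then have "xs i0 \<noteq> []" using assms(5) by auto
    then have Une: "U \<noteq> {}" using i0 by (auto simp: U_def)
    then have cU0: "card U > 0" using finU by (simp add: card_gt_0_iff)
    have cUK: "card U \<le> Kf m"
      unfolding Kf_def using lt by (intro le_nat_floor) (simp add: U_def m_def)
    obtain g where g: "bij_betw g {0..<card U} U" using ex_bij_betw_nat_finite[OF finU] by blast
    define f where "f = restrict (\<lambda>j. if j < card U then g j else g 0) {..<Kf m}"
    have g0: "g 0 \<in> U" using g cU0 bij_betwE by fastforce
    have gj: "g j \<in> U" if "j < card U" for j using g that bij_betwE by fastforce
    have fv: "(if j < card U then g j else g 0) \<in> {..<n}" for j
    proof (cases "j < card U")
      case True
      then show ?thesis using gj[OF True] Usub by (simp add: subset_iff)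
    next
      case False
      then show ?thesis using g0 Usub by (simp add: subset_iff)
    qed
    have fP: "f \<in> {..<Kf m} \<rightarrow>\<^sub>E {..<n}"
      unfolding f_def using fv by (intro PiE_I) auto
    have fim: "U \<subseteq> f ` {..<Kf m}"
    proof
      fix u assume "u \<in> U"
      then obtain j where j: "j < card U" "u = g j" using g
        by (metis atLeastLessThan_iff bij_betw_def imageE)
      then have "f j = u" "j \<in> {..<Kf m}" using cUK by (auto simp: f_def)
      then show "u \<in> f ` {..<Kf m}" by force
    qed
    have "\<forall>i\<in>M. set (xs i) \<subseteq> f ` {..<Kf m}" using fim unfolding U_def by blast
    then have xE: "xs \<in> Ev M f" by (simp add: Ev_def m_def)
    have MS: "M \<in> SM m" using M(1) by (simp add: SM_def m_def)
    have mI: "m \<in> {1..mm}" using m1 mmm by simp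
    show "xs \<in> (\<Union>m\<in>{1..mm}. \<Union>M\<in>SM m. \<Union>f\<in>({..<Kf m} \<rightarrow>\<^sub>E {..<n}). Ev M f)"
      by (rule UN_I[OF mI], rule UN_I[OF MS], rule UN_I[OF fP], rule xE)
  qed
  have finSM: "finite (SM m)" for m
    by (rule finite_subset[of _ "Pow {..<N}"]) (auto simp: SM_def)
  have cardSM: "card (SM m) = N choose m" for m
    using n_subsets[of "{..<N}" m] by (simp add: SM_def)
  have evb: "measure_pmf.prob P (Ev M f) \<le> (real (Kf m) / real n) ^ (l * m)" if "M \<in> SM m" for M f m
  proof -
    have cM: "card M = m" "M \<subseteq> {..<N}" using that by (auto simp: SM_def)
    have "measure_pmf.prob P (Ev M f) \<le> (real (card (f ` {..<Kf m})) / real n) ^ (l * m)"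
      using event_prob[OF cM(2) assms(3), of "f ` {..<Kf m}" l] cM(1)
      by (simp add: P_def Q_def Ev_def)
    also have "\<dots> \<le> (real (Kf m) / real n) ^ (l * m)"
      using that card_image_le[of "{..<Kf m}" f]
      by (intro power_mono divide_right_mono) (auto simp: SM_def)
    finally show ?thesis .
  qed
  have "measure_pmf.prob P Bad = measure_pmf.prob P (Bad \<inter> set_pmf P)"
    by (simp add: measure_Int_set_pmf)
  also have "\<dots> \<le> measure_pmf.prob P (\<Union>m\<in>{1..mm}. \<Union>M\<in>SM m. \<Union>f\<in>({..<Kf m} \<rightarrow>\<^sub>E {..<n}). Ev M f)"
    using cover by (intro measure_pmf.finite_measure_mono) auto
  also have "\<dots> \<le> (\<Sum>m\<in>{1..mm}. measure_pmf.prob P (\<Union>M\<in>SM m. \<Union>f\<in>({..<Kf m} \<rightarrow>\<^sub>E {..<n}). Ev M f))"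
    by (intro measure_UNION_le) auto
  also have "\<dots> \<le> (\<Sum>m\<in>{1..mm}. \<Sum>M\<in>SM m. measure_pmf.prob P (\<Union>f\<in>({..<Kf m} \<rightarrow>\<^sub>E {..<n}). Ev M f))"
    by (intro sum_mono measure_UNION_le finSM) auto
  also have "\<dots> \<le> (\<Sum>m\<in>{1..mm}. \<Sum>M\<in>SM m. \<Sum>f\<in>({..<Kf m} \<rightarrow>\<^sub>E {..<n}). measure_pmf.prob P (Ev M f))"
    by (intro sum_mono measure_UNION_le finite_PiE) auto
  also have "\<dots> \<le> (\<Sum>m\<in>{1..mm}. \<Sum>M\<in>SM m. \<Sum>f\<in>({..<Kf m} \<rightarrow>\<^sub>E {..<n}). (real (Kf m) / real n) ^ (l * m))"
    by (intro sum_mono evb) auto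
  also have "\<dots> = (\<Sum>m\<in>{1..mm}. real (N choose m) * real n ^ Kf m * (real (Kf m) / real n) ^ (l * m))"
    by (simp add: cardSM card_PiE mult.assoc)
  also have "\<dots> \<le> (\<Sum>m\<in>{1..mm}. (1/100) ^ m)"
  proof (intro sum_mono)
    fix m assume m: "m \<in> {1..mm}"
    have "real m \<le> B"
    proof -
      have "B \<ge> 0" by (simp add: B_def)
      then have "real mm \<le> B" by (simp add: mm_def)
      then show ?thesis using m by auto
    qed
    moreover have "real (Kf m) \<le> \<delta>/100 * real m * real l"
      unfolding Kf_def using assms(1) by (intro floor_le') simp
    ultimately show "real (N choose m) * real n ^ Kf m * (real (Kf m) / real n) ^ (l * m) \<le> (1/100) ^ m"
      using m assms by (intro analytic[of \<delta>]) (auto simp: B_def)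
  qed
  also have "\<dots> \<le> 1/99 - (1/100)^mm/99" by (rule geom)
  also have "\<dots> \<le> 1/20"
  proof -
    have "0 \<le> (1/100::real)^mm" by simp
    then show ?thesis by linarith
  qed
  finally have badb: "measure_pmf.prob P Bad \<le> 1/20" .
  have e1: "measure_pmf.prob P (F -` Good) = 1 - measure_pmf.prob P Bad"
  proof -
    have "measure_pmf.prob P Bad = 1 - measure_pmf.prob P (F -` Good)"
      unfolding Bad_def using measure_pmf.prob_compl[of "F -` Good" P] by simp
    then show ?thesis by simp
  qed
  have e2: "{G'. \<forall>M \<subseteq> {..<N}. real (card M) \<le> real n powr (99/100 * \<delta>) / real l \<longrightarrow>
                  real (card (\<Union>i\<in>M. fst G' i)) \<ge> 1/100 * \<delta> * real (card M) * real l} = fst -` Good"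
    by (auto simp: Good_def B_def)
  have e3: "measure_pmf.prob (rgp_gnp N l n) (fst -` Good) = measure_pmf.prob P (F -` Good)"
  proof -
    have "measure_pmf.prob (rgp_gnp N l n) (fst -` Good) = measure_pmf.prob (map_pmf fst (rgp_gnp N l n)) Good"
      by simp
    also have "\<dots> = measure_pmf.prob (map_pmf F P) Good"
      by (simp add: fst_rgp F_def P_def Q_def)
    finally show ?thesis by simp
  qed
  show ?thesis unfolding e2 e3 e1 using badb by linarith
qed

end
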